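(* Let $N\ge 1$ and $1\le K\le N$ be integers, let $\lambda_s>0$, $c>0$, and let $T_{\mathrm D}>c$ be a fixed deadline. Let $T_1,\dots,T_N$ be i.i.d. random variables with CDF $F(t)=1-e^{-\lambda_s(t-c)}$ for $t>c$ (and $F(t)=0$ for $t\le c$), and let $T_N(K)$ be the $K$-th smallest of $T_1,\dots,T_N$. Fix a device index $n\in\{1,\dots,N\}$ and let $$\mathcal C_{\mathrm F,1}=\{T_N(K)<T_{\mathrm D}\}\cap\{T_n>\min\{T_{\mathrm D},T_N(K)\}\},$$ assumed to have positive probability. Then $$\mathbb E[T_N(K)\mid \mathcal C_{\mathrm F,1}]=\frac{1}{1-\mathcal Z_K}\sum_{j=0}^{K-1}\frac{B_{K,j}}{\lambda_s U_{K,j}^2}\Big[1+c\lambda_sU_{K,j}-(1+T_{\mathrm D}\lambda_sU_{K,j})V_{K,j}\Big],$$ $$\mathbb E[T_N(K)^2\mid \mathcal C_{\mathrm F,1}]=\frac{1}{1-\mathcal Z_K}\sum_{j=0}^{K-1}\frac{B_{K,j}}{\lambda_s^2 U_{K,j}^3}\Big[(1+c\lambda_sU_{K,j})^2+1-\big((1+T_{\mathrm D}\lambda_sU_{K,j})^2+1\big)V_{K,j}\Big],$$ where $B_{K,j}=K\binom{N}{K}\binom{K-1}{j}(-1)^j$, $U_{K,j}=N-K+1+j$, $V_{K,j}=e^{-\lambda_sU_{K,j}(T_{\mathrm D}-c)}$, and $\mathcal Z_K=\mathbb P(T_{\mathrm D}<T_N(K))=\sum_{i=0}^{K-1}B_{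K,i}\frac{V_{K,i}}{U_{K,i}}$.
   Context: Model: an access point multicasts a status update to $N$ devices; $T_n$ is the (shifted exponential) time needed to deliver it to device $n$, the devices' times being i.i.d. The transmission terminates at time $\min\{T_{\mathrm D},T_N(K)\}$, i.e., when the deadline expires or when $K$ devices have received it. $\mathcal C_{\mathrm F,1}$ is the event that device $n$ fails to receive the update and transmission stopped because $K$ other devices received it before the deadline. *)

theory Defs
  imports "HOL-Probability.Probability"
begin

definition kth_smallest :: "nat \<Rightarrow> nat \<Rightarrow> (nat \<Rightarrow> 'a \<Rightarrow> real) \<Rightarrow> 'a \<Rightarrow> real" where
  "kth_smallest N K T \<omega> = sort (map (\<lambda>i. T i \<omega>) [1..<N+1]) ! (K - 1)"

definition cond_expect_event :: "'a measure \<Rightarrow> ('a \<Rightarrow> real) \<Rightarrow> 'a set \<Rightarrow> real" where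
  "cond_expect_event M X C = (\<integral>\<omega>. indicator C \<omega> * X \<omega> \<partial>M) / measure M C"

definition shifted_exp_cdf :: "real \<Rightarrow> real \<Rightarrow> real \<Rightarrow> real" where
  "shifted_exp_cdf lam c t = (if t \<le> c then 0 else 1 - exp (- lam * (t - c)))"

definition coefB :: "nat \<Rightarrow> nat \<Rightarrow> nat \<Rightarrow> real" where
  "coefB N K j = real K * real (N choose K) * real ((K - 1) choose j) * (-1) ^ j"

definition coefU :: "nat \<Rightarrow> nat \<Rightarrow> nat \<Rightarrow> real" where
  "coefU N K j = real N - real K + 1 + real j"

definition coefV :: "real \<Rightarrow> real \<Rightarrow> real \<Rightarrow> nat \<Rightarrow> nat \<Rightarrow> nat \<Rightarrow> real" where
  "coefV lam c TD N K j = exp (- lam * coefU N K j * (TD - c))"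

definition probZ :: "real \<Rightarrow> real \<Rightarrow> real \<Rightarrow> nat \<Rightarrow> nat \<Rightarrow> real" where
  "probZ lam c TD N K = (\<Sum>i<K. coefB N K i * coefV lam c TD N K i / coefU N K i)"

end

theory Submission
  imports Defs
begin

lemma sorted_kth_le:
  fixes ys :: "real list"
  assumes "sorted ys" "1 \<le> K" "K \<le> length ys"
  shows "ys ! (K - 1) \<le> t \<longleftrightarrow> K \<le> length (filter (\<lambda>x. x \<le> t) ys)"
  using assms
proof (induction ys arbitrary: K)
  case Nil then show ?case by simp
next
  case (Cons y ys)
  show ?case
  proof (cases "y \<le> t")
    case True
    show ?thesis
    proof (cases "K = 1")
      case True then show ?thesis using \<open>y \<le> t\<close> by simp
    next
      case False
      then have "(y # ys) ! (K - 1) = ys ! (K - 1 - 1)" using Cons.prems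
        by (simp add: nth_Cons')
      moreover have "ys ! (K - 1 - 1) \<le> t \<longleftrightarrow> K - 1 \<le> length (filter (\<lambda>x. x \<le> t) ys)"
        using Cons.IH[of "K - 1"] Cons.prems False by auto
      ultimately show ?thesis using True False Cons.prems by auto
    qed
  next
    case False
    have all: "\<forall>x\<in>set ys. y \<le> x" using Cons.prems by simp
    then have "filter (\<lambda>x. x \<le> t) ys = []" using False by (auto simp: filter_empty_conv)
    moreover have "y \<le> (y # ys) ! (K - 1)"
      using Cons.prems all by (cases "K - 1") (auto)
    ultimately show ?thesis using False Cons.prems by auto
  qed
qed

lemma kth_le_iff:
  fixes xs :: "real list"
  assumes "1 \<le> K" "K \<le> length xs"
  shows "sort xs ! (K - 1) \<le> t \<longleftrightarrow> K \<le> length (filter (\<lambda>x. x \<le> t) xs)"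
proof -
  have "length (filter (\<lambda>x. x \<le> t) (sort xs)) = length (filter (\<lambda>x. x \<le> t) xs)"
    by (metis mset_filter mset_sort size_mset)
  then show ?thesis using sorted_kth_le[of "sort xs" K t] assms by simp
qed

lemma kth_strict:
  fixes xs :: "real list"
  assumes "distinct xs" "1 \<le> K" "K < length xs"
  shows "sort xs ! (K - 1) < sort xs ! K"
proof -
  have "sorted_wrt (<) (sort xs)" using assms by (simp add: strict_sorted_iff)
  then show ?thesis using assms sorted_wrt_nth_less[of "(<)" "sort xs" "K - 1" K] by simp
qed

lemma kth_count_eq:
  fixes xs :: "real list"
  assumes "distinct xs" "1 \<le> K" "K \<le> length xs"
  shows "length (filter (\<lambda>x. x \<le> sort xs ! (K - 1)) xs) = K"
proof -
  let ?X = "sort xs ! (K - 1)"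
  have ge: "K \<le> length (filter (\<lambda>x. x \<le> ?X) xs)" using kth_le_iff[OF assms(2,3), of ?X] by simp
  have "\<not> Suc K \<le> length (filter (\<lambda>x. x \<le> ?X) xs)" if "K < length xs"
  proof
    assume "Suc K \<le> length (filter (\<lambda>x. x \<le> ?X) xs)"
    then have "sort xs ! (Suc K - 1) \<le> ?X" using kth_le_iff[of "Suc K" xs ?X] that by simp
    with kth_strict[OF assms(1,2) that] show False by simp
  qed
  moreover have "length (filter (\<lambda>x. x \<le> ?X) xs) \<le> length xs" by (rule length_filter_le)
  ultimately have "length (filter (\<lambda>x. x \<le> ?X) xs) \<le> K" using assms
    by (cases "K < length xs") auto
  then show ?thesis using ge by simp
qed

lemma binom_id: "1 \<le> m \<Longrightarrow> m \<le> N \<Longrightarrow> m * (N choose m) = (N - m + 1) * (N choose (m - 1))"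
proof -
  assume "1 \<le> m" "m \<le> N"
  then obtain k where k: "m = Suc k" by (cases m) auto
  have "Suc k * (N choose Suc k) = N * ((N - 1) choose k)" by (rule binomial_absorption)
  moreover have "(N - k) * (N choose k) = N * ((N - 1) choose k)" by (rule binomial_absorb_comp)
  moreover have "N - k = N - Suc k + 1" using k \<open>m \<le> N\<close> by simp
  ultimately show ?thesis using k by (metis diff_Suc_1)
qed

definition Lpoly :: "nat \<Rightarrow> nat \<Rightarrow> real \<Rightarrow> real" where
  "Lpoly N K q = (\<Sum>m\<in>{K..N}. real (N choose m) * (1 - q) ^ m * q ^ (N - m))"

definition Rpoly :: "nat \<Rightarrow> nat \<Rightarrow> real \<Rightarrow> real" where
  "Rpoly N K q = (\<Sum>j<K. coefB N K j / coefU N K j * (1 - q ^ (N - K + 1 + j)))"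

lemma coefU_nat: "K \<le> N \<Longrightarrow> coefU N K j = real (N - K + 1 + j)"
  by (simp add: coefU_def of_nat_diff)

lemma coefU_pos: "K \<le> N \<Longrightarrow> coefU N K j > 0"
  by (simp add: coefU_nat)

lemma BI:
  assumes "1 \<le> K"
  shows "(\<Sum>j<K. coefB N K j * q ^ (N - K + j)) = real K * real (N choose K) * q ^ (N - K) * (1 - q) ^ (K - 1)"
proof -
  have "(1 - q) ^ (K - 1) = (- q + 1) ^ (K - 1)" by simp
  also have "\<dots> = (\<Sum>j\<le>K-1. real ((K - 1) choose j) * (- q) ^ j * 1 ^ (K - 1 - j))"
    by (rule binomial_ring)
  also have "\<dots> = (\<Sum>j<K. real ((K - 1) choose j) * (-1) ^ j * q ^ j)"
    using assms by (intro sum.cong) (auto simp: power_minus' lessThan_Suc_atMost[symmetric] power_mult_distrib)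
  finally have e: "(1 - q) ^ (K - 1) = (\<Sum>j<K. real ((K - 1) choose j) * (-1) ^ j * q ^ j)" .
  show ?thesis
    unfolding e coefB_def sum_distrib_left
    by (intro sum.cong) (auto simp: power_add)
qed

lemma tele:
  fixes f :: "nat \<Rightarrow> real"
  shows "1 \<le> K \<Longrightarrow> K \<le> Suc n \<Longrightarrow> (\<Sum>m\<in>{K..n}. f m - f (m - 1)) = f n - f (K - 1)"
proof (induction n)
  case 0 then show ?case by (cases "K = 1") auto
next
  case (Suc n)
  show ?case
  proof (cases "K = Suc (Suc n)")
    case True then show ?thesis by simp
  next
    case False
    then have "{K..Suc n} = insert (Suc n) {K..n}" "Suc n \<notin> {K..n}" using Suc.prems by auto
    then show ?thesis using Suc False by simp
  qed
qed

lemma DERIV_term: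
  assumes "1 \<le> m" "m \<le> N"
  defines "a \<equiv> \<lambda>q m. real (N - m) * real (N choose m) * (1 - q) ^ m * q ^ (N - m - 1)"
  shows "DERIV (\<lambda>q. real (N choose m) * (1 - q) ^ m * q ^ (N - m)) q :> a q m - a q (m - 1)"
proof -
  have bi: "real m * real (N choose m) = real (N - m + 1) * real (N choose (m - 1))"
    using binom_id[OF assms(1,2)] by (metis of_nat_mult)
  have e1: "N - (m - 1) = N - m + 1" "N - (m - 1) - 1 = N - m" using assms by auto
  have h: "a q (m - 1) = real m * real (N choose m) * (1 - q) ^ (m - 1) * q ^ (N - m)"
    unfolding a_def e1 bi by simp
  have eq: "real (N choose m) * (real m * (1 - q) ^ (m - 1) * (0 - 1)) * q ^ (N - m) +
     real (N choose m) * (1 - q) ^ m * (real (N - m) * q ^ (N - m - 1)) = a q m - a q (m - 1)"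
    unfolding h by (simp add: a_def algebra_simps)
  have "DERIV (\<lambda>q. real (N choose m) * (1 - q) ^ m * q ^ (N - m)) q :>
     real (N choose m) * (real m * (1 - q) ^ (m - 1) * (0 - 1)) * q ^ (N - m) +
     real (N choose m) * (1 - q) ^ m * (real (N - m) * q ^ (N - m - 1))"
    by (auto intro!: derivative_eq_intros)
  then show ?thesis unfolding eq .
qed

lemma DERIV_L:
  assumes "1 \<le> K" "K \<le> N"
  shows "DERIV (Lpoly N K) q :> - (real K * real (N choose K) * q ^ (N - K) * (1 - q) ^ (K - 1))"
proof -
  define a where "a \<equiv> \<lambda>m. real (N - m) * real (N choose m) * (1 - q) ^ m * q ^ (N - m - 1)"
  have "DERIV (Lpoly N K) q :> (\<Sum>m\<in>{K..N}. a m - a (m - 1))"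
    unfolding Lpoly_def [abs_def]
  proof (rule DERIV_sum)
    fix m assume "m \<in> {K..N}"
    then show "DERIV (\<lambda>q. real (N choose m) * (1 - q) ^ m * q ^ (N - m)) q :> a m - a (m - 1)"
      unfolding a_def using DERIV_term[of m N q] assms by simp
  qed
  also have "(\<Sum>m\<in>{K..N}. a m - a (m - 1)) = a N - a (K - 1)"
    using assms by (intro tele) auto
  also have "a N = 0" unfolding a_def by simp
  also have "a (K - 1) = real K * real (N choose K) * q ^ (N - K) * (1 - q) ^ (K - 1)"
  proof -
    have bi: "real K * real (N choose K) = real (N - K + 1) * real (N choose (K - 1))"
      using binom_id[OF assms] by (metis of_nat_mult)
    have e1: "N - (K - 1) = N - K + 1" "N - (K - 1) - 1 = N - K" using assms by auto
    show ?thesis unfolding a_def e1 bi[symmetric] by (simp add: ac_simps)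
  qed
  finally show ?thesis by simp
qed

lemma DERIV_R:
  assumes "1 \<le> K" "K \<le> N"
  shows "DERIV (Rpoly N K) q :> - (real K * real (N choose K) * q ^ (N - K) * (1 - q) ^ (K - 1))"
proof -
  have "DERIV (Rpoly N K) q :> (\<Sum>j<K. - (coefB N K j * q ^ (N - K + j)))"
    unfolding Rpoly_def [abs_def]
  proof (rule DERIV_sum)
    fix j assume "j \<in> {..<K}"
    have u: "coefU N K j = real (N - K + 1 + j)" using assms by (simp add: coefU_nat)
    define n where "n = N - K + 1 + j"
    have d: "DERIV (\<lambda>q. 1 - q ^ n) q :> 0 - real n * q ^ (n - Suc 0)"
      by (intro DERIV_diff DERIV_const DERIV_pow)
    have "DERIV (\<lambda>q. coefB N K j / coefU N K j * (1 - q ^ n)) q :>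
        coefB N K j / coefU N K j * (0 - real n * q ^ (n - Suc 0))"
      by (rule DERIV_cmult[OF d])
    moreover have "coefB N K j / coefU N K j * (0 - real n * q ^ (n - Suc 0))
       = - (coefB N K j * q ^ (N - K + j))"
      unfolding u n_def[symmetric] using assms by (simp add: field_simps n_def)
    ultimately have "DERIV (\<lambda>q. coefB N K j / coefU N K j * (1 - q ^ n)) q :>
        - (coefB N K j * q ^ (N - K + j))" by simp
    then show "DERIV (\<lambda>q. coefB N K j / coefU N K j * (1 - q ^ (N - K + 1 + j))) q :>
        - (coefB N K j * q ^ (N - K + j))" by (simp add: n_def)
  qed
  then show ?thesis using BI[OF assms(1), of N q] by (simp add: sum_negf)
qed

lemma L_eq_R:
  assumes "1 \<le> K" "K \<le> N"
  shows "Lpoly N K q = Rpoly N K q"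
proof -
  have "\<forall>x. DERIV (\<lambda>q. Lpoly N K q - Rpoly N K q) x :> 0"
    using DERIV_diff[OF DERIV_L[OF assms] DERIV_R[OF assms]] by simp
  then have "Lpoly N K q - Rpoly N K q = Lpoly N K 1 - Rpoly N K 1"
    by (rule DERIV_isconst_all)
  moreover have "Lpoly N K 1 = 0" unfolding Lpoly_def using assms by (intro sum.neutral) auto
  moreover have "Rpoly N K 1 = 0" unfolding Rpoly_def by simp
  ultimately show ?thesis by simp
qed

lemma sum_BU:
  assumes "1 \<le> K" "K \<le> N"
  shows "(\<Sum>j<K. coefB N K j / coefU N K j) = 1"
proof -
  have "Lpoly N K 0 = 1"
  proof -
    have "Lpoly N K 0 = (\<Sum>m\<in>{K..N}. if m = N then 1 else 0)"
      unfolding Lpoly_def by (intro sum.cong) auto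
    also have "\<dots> = 1" using assms by simp
    finally show ?thesis .
  qed
  moreover have "Rpoly N K 0 = (\<Sum>j<K. coefB N K j / coefU N K j)" unfolding Rpoly_def by simp
  ultimately show ?thesis using L_eq_R[OF assms] by simp
qed

lemma kth_le_card:
  assumes "1 \<le> K" "K \<le> N"
  shows "kth_smallest N K T \<omega> \<le> t \<longleftrightarrow> K \<le> card {i\<in>{1..N}. T i \<omega> \<le> t}"
proof -
  have "length (filter (\<lambda>x. x \<le> t) (map (\<lambda>i. T i \<omega>) [1..<N+1])) = card {i\<in>{1..N}. T i \<omega> \<le> t}"
  proof -
    have "set [1..<N+1] = {1..N}" by auto
    then have "length (filter (\<lambda>x. x \<le> t) (map (\<lambda>i. T i \<omega>) [1..<N+1])) = card ({i. T i \<omega> \<le> t} \<inter> {1..N})"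
      by (simp add: filter_map distinct_length_filter o_def)
    also have "{i. T i \<omega> \<le> t} \<inter> {1..N} = {i\<in>{1..N}. T i \<omega> \<le> t}" by auto
    finally show ?thesis .
  qed
  then show ?thesis unfolding kth_smallest_def using kth_le_iff[of K "map (\<lambda>i. T i \<omega>) [1..<N+1]" t] assms
    by simp
qed

lemma card_as_sum: "finite I \<Longrightarrow> real (card {i\<in>I. P i}) = (\<Sum>i\<in>I. if P i then 1 else 0)"
  by (simp add: sum.If_cases Int_def conj_commute)

lemma kth_meas:
  assumes "1 \<le> K" "K \<le> N" "\<And>i. i \<in> {1..N} \<Longrightarrow> T i \<in> borel_measurable M"
  shows "kth_smallest N K T \<in> borel_measurable M"
proof (subst borel_measurable_iff_le, intro allI)
  fix a
  have [measurable]: "(\<lambda>w. \<Sum>i\<in>{1..N}. if T i w \<le> a then 1 else 0 :: real) \<in> borel_measurable M"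
    using assms(3) by (intro borel_measurable_sum) measurable
  have eq: "real (card {i\<in>{1..N}. T i w \<le> a}) = (\<Sum>i\<in>{1..N}. if T i w \<le> a then 1 else 0)" for w
    by (rule card_as_sum) simp
  have "{w \<in> space M. kth_smallest N K T w \<le> a} = {w \<in> space M. real K \<le> real (card {i\<in>{1..N}. T i w \<le> a})}"
    using kth_le_card[OF assms(1,2), of T] by simp
  also have "\<dots> = {w \<in> space M. real K \<le> (\<Sum>i\<in>{1..N}. if T i w \<le> a then 1 else 0)}"
    unfolding eq ..
  also have "\<dots> \<in> sets M" by measurable
  finally show "{w \<in> space M. kth_smallest N K T w \<le> a} \<in> sets M" .
qed

locale setting = prob_space M for M :: "'a measure" +
  fixes T :: "nat \<Rightarrow> 'a \<Rightarrow> real" and N K :: nat and lam c :: real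
  assumes N1: "N \<ge> 1" and K1: "1 \<le> K" and KN: "K \<le> N" and lam: "lam > 0"
   and meas: "\<And>i. i \<in> {1..N} \<Longrightarrow> T i \<in> borel_measurable M"
   and indep: "indep_vars (\<lambda>_. borel) T {1..N}"
   and cdfT: "\<And>i t. i \<in> {1..N} \<Longrightarrow> measure M {\<omega> \<in> space M. T i \<omega> \<le> t} = shifted_exp_cdf lam c t"
begin

abbreviation "I \<equiv> {1..N}"
abbreviation "X \<equiv> kth_smallest N K T"

lemma X_meas[measurable]: "X \<in> borel_measurable M"
  using kth_meas[OF K1 KN, of T M] meas by blast

lemma prob_count:
  "prob {\<omega>\<in>space M. card {i\<in>I. T i \<omega> \<le> t} = m} =
     real (N choose m) * shifted_exp_cdf lam c t ^ m * (1 - shifted_exp_cdf lam c t) ^ (N - m)"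
proof -
  define F where "F = shifted_exp_cdf lam c t"
  define Sm where "Sm = {S. S \<subseteq> I \<and> card S = m}"
  define E where "E = (\<lambda>S. {\<omega>\<in>space M. {i\<in>I. T i \<omega> \<le> t} = S})"
  define B where "B = (\<lambda>(S::nat set) i. if i \<in> S then {..t::real} else {t<..})"
  have finSm: "finite Sm" unfolding Sm_def by simp
  have E_eq: "E S = (\<Inter>i\<in>I. T i -` B S i \<inter> space M)" if "S \<in> Sm" for S
  proof -
    have SI: "S \<subseteq> I" using that by (simp add: Sm_def)
    have "\<omega> \<in> E S \<longleftrightarrow> \<omega> \<in> (\<Inter>i\<in>I. T i -` B S i \<inter> space M)" for \<omega>
    proof -
      have "\<omega> \<in> E S \<longleftrightarrow> (\<omega> \<in> space M \<and> (\<forall>i\<in>I. T i \<omega> \<le> t \<longleftrightarrow> i \<in> S))"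
        unfolding E_def using SI by (auto simp: set_eq_iff)
      also have "\<dots> \<longleftrightarrow> \<omega> \<in> (\<Inter>i\<in>I. T i -` B S i \<inter> space M)"
      proof -
        have bi: "T i \<omega> \<in> B S i \<longleftrightarrow> (T i \<omega> \<le> t \<longleftrightarrow> i \<in> S)" for i
          by (simp add: B_def not_le)
        have "I \<noteq> {}" using N1 by auto
        then show ?thesis unfolding INT_iff vimage_eq Int_iff bi by blast
      qed
      finally show ?thesis .
    qed
    then show ?thesis by blast
  qed
  have pE: "prob (E S) = F ^ m * (1 - F) ^ (N - m)" if "S \<in> Sm" for S
  proof -
    have "prob (E S) = (\<Prod>i\<in>I. prob (T i -` B S i \<inter> space M))"
      unfolding E_eq[OF that] using N1
      by (intro indep_varsD_finite[OF indep]) (auto simp: B_def)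
    also have "\<dots> = (\<Prod>i\<in>I. if i \<in> S then F else 1 - F)"
    proof (intro prod.cong refl)
      fix i assume i: "i \<in> I"
      have e1: "T i -` {..t} \<inter> space M = {\<omega> \<in> space M. T i \<omega> \<le> t}" by auto
      have e2: "T i -` {t<..} \<inter> space M = space M - {\<omega> \<in> space M. T i \<omega> \<le> t}" by auto
      have ev: "{\<omega> \<in> space M. T i \<omega> \<le> t} \<in> events" using meas[OF i] by measurable
      show "prob (T i -` B S i \<inter> space M) = (if i \<in> S then F else 1 - F)"
        unfolding B_def using cdfT[OF i] prob_compl[OF ev] e1 e2 by (auto simp: F_def)
    qed
    also have "\<dots> = F ^ card (I \<inter> {x. x \<in> S}) * (1 - F) ^ card (I \<inter> - {x. x \<in> S})"
      by (simp add: prod.If_cases)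
    also have "I \<inter> {x. x \<in> S} = S" using that by (auto simp: Sm_def)
    also have "card (I \<inter> - {x. x \<in> S}) = N - m"
    proof -
      have "I \<inter> - {x. x \<in> S} = I - S" by auto
      moreover have SI: "S \<subseteq> I" "card S = m" using that by (auto simp: Sm_def)
      moreover have "finite S" using SI finite_subset by blast
      ultimately show ?thesis using card_Diff_subset[of S I] by simp
    qed
    finally show ?thesis using that by (simp add: Sm_def)
  qed
  have "{\<omega>\<in>space M. card {i\<in>I. T i \<omega> \<le> t} = m} = (\<Union>S\<in>Sm. E S)"
    unfolding E_def Sm_def by auto
  then have "prob {\<omega>\<in>space M. card {i\<in>I. T i \<omega> \<le> t} = m} = (\<Sum>S\<in>Sm. prob (E S))"
  proof (simp only:, intro finite_measure_finite_Union finSm)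
    show "E ` Sm \<subseteq> events"
    proof
      fix A assume "A \<in> E ` Sm"
      then obtain S where "S \<in> Sm" "A = E S" by auto
      have ev: "T i -` B S i \<inter> space M \<in> events" if "i \<in> I" for i
        by (rule measurable_sets[OF meas[OF that]]) (simp add: B_def)
      have "I \<noteq> {}" using N1 by auto
      then have "(\<Inter>i\<in>I. T i -` B S i \<inter> space M) \<in> events"
        using ev by (intro sets.finite_INT) auto
      then show "A \<in> events" using E_eq[OF \<open>S \<in> Sm\<close>] \<open>A = E S\<close> by simp
    qed
    show "disjoint_family_on E Sm" unfolding disjoint_family_on_def E_def by auto
  qed
  also have "\<dots> = real (card Sm) * (F ^ m * (1 - F) ^ (N - m))" using pE by simp
  also have "card Sm = N choose m" unfolding Sm_def by (simp add: n_subsets)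
  finally show ?thesis by (simp add: F_def)
qed

lemma cdf_X:
  "prob {\<omega>\<in>space M. X \<omega> \<le> t} = Lpoly N K (1 - shifted_exp_cdf lam c t)"
proof -
  define C where "C = (\<lambda>m. {\<omega>\<in>space M. card {i\<in>I. T i \<omega> \<le> t} = m})"
  have "{\<omega>\<in>space M. X \<omega> \<le> t} = (\<Union>m\<in>{K..N}. C m)"
  proof -
    have "card {i\<in>I. T i \<omega> \<le> t} \<le> card I" for \<omega>
      by (intro card_mono) auto
    then have "card {i\<in>I. T i \<omega> \<le> t} \<le> N" for \<omega> by (metis card_atLeastAtMost diff_Suc_1)
    then show ?thesis unfolding C_def using kth_le_card[OF K1 KN, of T] by auto
  qed
  then have "prob {\<omega>\<in>space M. X \<omega> \<le> t} = (\<Sum>m\<in>{K..N}. prob (C m))"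
  proof (simp only:, intro finite_measure_finite_Union)
    have "C m \<in> events" for m
    proof -
      have [measurable]: "(\<lambda>w. \<Sum>i\<in>I. if T i w \<le> t then 1 else 0 :: real) \<in> borel_measurable M"
        using meas by (intro borel_measurable_sum) measurable
      have "C m = {w\<in>space M. (\<Sum>i\<in>I. if T i w \<le> t then 1 else 0 :: real) = real m}"
      proof -
        have eq: "real (card {i\<in>I. T i w \<le> t}) = (\<Sum>i\<in>I. if T i w \<le> t then 1 else 0)" for w
          by (rule card_as_sum) simp
        have "C m = {w\<in>space M. real (card {i\<in>I. T i w \<le> t}) = real m}"
          unfolding C_def by simp
        then show ?thesis unfolding eq .
      qed
      also have "\<dots> \<in> events" by measurable
      finally show ?thesis .
    qed
    then show "C ` {K..N} \<subseteq> events" by auto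
    show "disjoint_family_on C {K..N}" unfolding disjoint_family_on_def C_def by auto
  qed simp
  also have "\<dots> = Lpoly N K (1 - shifted_exp_cdf lam c t)"
    unfolding Lpoly_def C_def prob_count by simp
  finally show ?thesis .
qed

end

definition h0 :: "nat \<Rightarrow> nat \<Rightarrow> real \<Rightarrow> real \<Rightarrow> real \<Rightarrow> real" where
  "h0 N K lam c x = (\<Sum>j<K. coefB N K j * lam * exp (- lam * coefU N K j * (x - c)))"

definition fK :: "nat \<Rightarrow> nat \<Rightarrow> real \<Rightarrow> real \<Rightarrow> real \<Rightarrow> real" where
  "fK N K lam c x = (if c < x then h0 N K lam c x else 0)"

definition G0 :: "nat \<Rightarrow> nat \<Rightarrow> real \<Rightarrow> real \<Rightarrow> real \<Rightarrow> real" where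
  "G0 N K lam c x = (\<Sum>j<K. coefB N K j / coefU N K j * (1 - exp (- lam * coefU N K j * (x - c))))"

lemma exp_pow: "K \<le> N \<Longrightarrow> exp (- lam * coefU N K j * (x - c)) = exp (- lam * (x - c)) ^ (N - K + 1 + j)"
proof -
  assume "K \<le> N"
  then have "- lam * coefU N K j * (x - c) = real (N - K + 1 + j) * (- lam * (x - c))"
    by (simp add: coefU_nat)
  then show ?thesis by (subst (1) \<open>- lam * coefU N K j * (x - c) = _\<close>) (rule exp_of_nat_mult)
qed

lemma h0_nonneg:
  assumes "1 \<le> K" "K \<le> N" "lam > 0" "c \<le> x"
  shows "h0 N K lam c x \<ge> 0"
proof -
  define q where "q = exp (- lam * (x - c))"
  have q0: "q > 0" unfolding q_def by simp
  have q1: "q \<le> 1" unfolding q_def using assms by simp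
  have "h0 N K lam c x = lam * q * (\<Sum>j<K. coefB N K j * q ^ (N - K + j))"
    unfolding h0_def exp_pow[OF assms(2)] q_def[symmetric] sum_distrib_left
    by (intro sum.cong) (auto simp: power_add)
  also have "\<dots> = lam * q * (real K * real (N choose K) * q ^ (N - K) * (1 - q) ^ (K - 1))"
    by (simp add: BI[OF assms(1)])
  also have "\<dots> \<ge> 0" using q0 q1 assms by (intro mult_nonneg_nonneg) auto
  finally show ?thesis .
qed

lemma fK_nonneg: "1 \<le> K \<Longrightarrow> K \<le> N \<Longrightarrow> lam > 0 \<Longrightarrow> fK N K lam c x \<ge> 0"
  unfolding fK_def using h0_nonneg[of K N lam c x] by auto

lemma G0_deriv:
  assumes "K \<le> N"
  shows "DERIV (G0 N K lam c) x :> h0 N K lam c x"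
  unfolding G0_def[abs_def] h0_def
proof (rule DERIV_sum)
  fix j assume "j \<in> {..<K}"
  have U: "coefU N K j \<noteq> 0" using coefU_pos[OF assms] by (simp add: less_le)
  show "DERIV (\<lambda>x. coefB N K j / coefU N K j * (1 - exp (- lam * coefU N K j * (x - c)))) x :>
     coefB N K j * lam * exp (- lam * coefU N K j * (x - c))"
    using U by (auto intro!: derivative_eq_intros simp: field_simps)
qed

lemma G0_Rpoly: "K \<le> N \<Longrightarrow> G0 N K lam c x = Rpoly N K (exp (- lam * (x - c)))"
  unfolding G0_def Rpoly_def by (simp only: exp_pow)

lemma G0_c: "G0 N K lam c c = 0"
  unfolding G0_def by simp

lemma nn_fK:
  assumes "1 \<le> K" "K \<le> N" "lam > 0"
  shows "(\<integral>\<^sup>+x. ennreal (fK N K lam c x) * indicator {..t} x \<partial>lborel) =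
          ennreal (if t \<le> c then 0 else G0 N K lam c t)"
proof (cases "t \<le> c")
  case True
  then have "(\<lambda>x. ennreal (fK N K lam c x) * indicator {..t} x) = (\<lambda>x. 0)"
    unfolding fK_def by (auto simp: indicator_def)
  then show ?thesis using True by simp
next
  case False
  have "(\<integral>\<^sup>+x. ennreal (fK N K lam c x) * indicator {..t} x \<partial>lborel) =
        (\<integral>\<^sup>+x. ennreal (indicator {c..t} x * h0 N K lam c x) \<partial>lborel)"
  proof (intro nn_integral_cong_AE)
    show "AE x in lborel. ennreal (fK N K lam c x) * indicator {..t} x = ennreal (indicator {c..t} x * h0 N K lam c x)"
      using AE_lborel_singleton[of c]
      by eventually_elim (auto simp: fK_def indicator_def)
  qed
  also have "\<dots> = ennreal (G0 N K lam c t - G0 N K lam c c)"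
  proof (rule nn_integral_has_integral_lebesgue)
    show "\<And>x. x \<in> {c..t} \<Longrightarrow> 0 \<le> h0 N K lam c x" using h0_nonneg assms by auto
    show "(h0 N K lam c has_integral G0 N K lam c t - G0 N K lam c c) {c..t}"
      using False
      by (intro fundamental_theorem_of_calculus)
         (auto simp: has_real_derivative_iff_has_vector_derivative[symmetric]
           intro: has_field_derivative_at_within G0_deriv[OF assms(2)])
  qed
  finally show ?thesis using False by (simp add: G0_c)
qed

lemma fK_meas[measurable]: "fK N K lam c \<in> borel_measurable borel"
  unfolding fK_def[abs_def] h0_def by measurable

context setting
begin

abbreviation "dens \<equiv> density lborel (\<lambda>x. ennreal (fK N K lam c x))"

lemma Lpoly_1: "Lpoly N K 1 = 0"
  unfolding Lpoly_def using K1 by (intro sum.neutral) auto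

lemma emeasure_dens: "emeasure dens {..t} = ennreal (prob {\<omega>\<in>space M. X \<omega> \<le> t})"
proof -
  have "emeasure dens {..t} = (\<integral>\<^sup>+x. ennreal (fK N K lam c x) * indicator {..t} x \<partial>lborel)"
    by (rule emeasure_density) auto
  also have "\<dots> = ennreal (if t \<le> c then 0 else G0 N K lam c t)"
    by (rule nn_fK[OF K1 KN lam])
  also have "(if t \<le> c then 0 else G0 N K lam c t) = prob {\<omega>\<in>space M. X \<omega> \<le> t}"
  proof (cases "t \<le> c")
    case True
    then show ?thesis unfolding cdf_X by (simp add: shifted_exp_cdf_def Lpoly_1)
  next
    case False
    then show ?thesis unfolding cdf_X
      by (simp add: shifted_exp_cdf_def L_eq_R[OF K1 KN] G0_Rpoly[OF KN])
  qed
  finally show ?thesis .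
qed

lemma emeasure_distrX: "emeasure (distr M borel X) {..t} = ennreal (prob {\<omega>\<in>space M. X \<omega> \<le> t})"
proof -
  have "emeasure (distr M borel X) {..t} = emeasure M (X -` {..t} \<inter> space M)"
    by (rule emeasure_distr) auto
  also have "X -` {..t} \<inter> space M = {\<omega>\<in>space M. X \<omega> \<le> t}" by auto
  finally show ?thesis by (simp add: emeasure_eq_measure)
qed

lemma prob_dens: "prob_space dens"
proof
  have inc: "incseq (\<lambda>n::nat. {..real n})" by (auto simp: incseq_def)
  have U: "(\<Union>n::nat. {..real n}) = UNIV"
    by (auto intro: real_arch_simple)
  have "emeasure dens UNIV = (SUP n::nat. emeasure dens {..real n})"
  proof -
    have "range (\<lambda>n::nat. {..real n}) \<subseteq> sets dens" by auto
    then show ?thesis using SUP_emeasure_incseq[OF _ inc] U by simp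
  qed
  also have "\<dots> = (SUP n::nat. emeasure (distr M borel X) {..real n})"
    by (simp add: emeasure_dens emeasure_distrX)
  also have "\<dots> = emeasure (distr M borel X) UNIV"
  proof -
    have "range (\<lambda>n::nat. {..real n}) \<subseteq> sets (distr M borel X)" by auto
    then show ?thesis using SUP_emeasure_incseq[OF _ inc] U by simp
  qed
  also have "\<dots> = 1"
    using prob_space.emeasure_space_1[OF prob_space_distr[of X borel]] by simp
  finally show "emeasure dens (space dens) = 1" by simp
qed

lemma distr_X: "distr M borel X = dens"
proof (rule cdf_unique)
  show "real_distribution (distr M borel X)" by (rule real_distribution_distr) simp
  show "real_distribution dens"
    using prob_dens by (simp add: real_distribution_def real_distribution_axioms_def)
  show "cdf (distr M borel X) = cdf dens"
  proof
    fix t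
    show "cdf (distr M borel X) t = cdf dens t"
      unfolding cdf_def measure_def by (simp add: emeasure_dens emeasure_distrX)
  qed
qed

end

definition G1 :: "nat \<Rightarrow> nat \<Rightarrow> real \<Rightarrow> real \<Rightarrow> real \<Rightarrow> real" where
  "G1 N K lam c x = (\<Sum>j<K. coefB N K j * (- (x / coefU N K j + 1 / (lam * (coefU N K j)\<^sup>2))
      * exp (- lam * coefU N K j * (x - c))))"

definition G2 :: "nat \<Rightarrow> nat \<Rightarrow> real \<Rightarrow> real \<Rightarrow> real \<Rightarrow> real" where
  "G2 N K lam c x = (\<Sum>j<K. coefB N K j * (- (x\<^sup>2 / coefU N K j + 2 * x / (lam * (coefU N K j)\<^sup>2)
      + 2 / (lam\<^sup>2 * (coefU N K j) ^ 3)) * exp (- lam * coefU N K j * (x - c))))"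

lemma G1_deriv:
  assumes "K \<le> N" "lam > 0"
  shows "DERIV (G1 N K lam c) x :> h0 N K lam c x * x ^ 1"
  unfolding G1_def[abs_def] h0_def sum_distrib_right
proof (rule DERIV_sum)
  fix j assume "j \<in> {..<K}"
  have U: "coefU N K j \<noteq> 0" using coefU_pos[OF assms(1)] by (simp add: less_le)
  show "DERIV (\<lambda>x. coefB N K j * (- (x / coefU N K j + 1 / (lam * (coefU N K j)\<^sup>2))
      * exp (- lam * coefU N K j * (x - c)))) x :>
     coefB N K j * lam * exp (- lam * coefU N K j * (x - c)) * x ^ 1"
    using U assms by (auto intro!: derivative_eq_intros simp: field_simps power2_eq_square)
qed

lemma G2_deriv:
  assumes "K \<le> N" "lam > 0"
  shows "DERIV (G2 N K lam c) x :> h0 N K lam c x * x ^ 2"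
  unfolding G2_def[abs_def] h0_def sum_distrib_right
proof (rule DERIV_sum)
  fix j assume "j \<in> {..<K}"
  have U: "coefU N K j \<noteq> 0" using coefU_pos[OF assms(1)] by (simp add: less_le)
  show "DERIV (\<lambda>x. coefB N K j * (- (x\<^sup>2 / coefU N K j + 2 * x / (lam * (coefU N K j)\<^sup>2)
      + 2 / (lam\<^sup>2 * (coefU N K j) ^ 3)) * exp (- lam * coefU N K j * (x - c)))) x :>
     coefB N K j * lam * exp (- lam * coefU N K j * (x - c)) * x ^ 2"
    using U assms by (auto intro!: derivative_eq_intros simp: field_simps power2_eq_square power3_eq_cube)
qed

lemma G0_deriv': "K \<le> N \<Longrightarrow> DERIV (G0 N K lam c) x :> h0 N K lam c x * x ^ 0"
  using G0_deriv by simp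

lemma h0_cont: "isCont (h0 N K lam c) x"
  unfolding h0_def by (intro continuous_intros)

lemma integral_fK:
  fixes G :: "real \<Rightarrow> real"
  assumes "1 \<le> K" "K \<le> N" "lam > 0" "c < TD"
    and G: "\<And>x. DERIV G x :> h0 N K lam c x * x ^ p"
  shows "integrable lborel (\<lambda>x. fK N K lam c x * (indicator {..<TD} x * x ^ p))"
    and "(\<integral>x. fK N K lam c x * (indicator {..<TD} x * x ^ p) \<partial>lborel) = G TD - G c"
proof -
  have pt: "fK N K lam c x * (indicator {..<TD} x * x ^ p) = (h0 N K lam c x * x ^ p) * indicator {c..TD} x"
    if "x \<noteq> c" "x \<noteq> TD" for x
    using that assms(4) by (cases "c < x"; cases "x < TD") (auto simp: fK_def indicator_def)
  have ae: "AE x in lborel. fK N K lam c x * (indicator {..<TD} x * x ^ p) = (h0 N K lam c x * x ^ p) * indicator {c..TD} x"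
    using AE_lborel_singleton[of c] AE_lborel_singleton[of TD]
    by eventually_elim (rule pt)
  have int: "integrable lborel (\<lambda>x. (h0 N K lam c x * x ^ p) * indicator {c..TD} x)"
    by (intro borel_integrable_atLeastAtMost continuous_intros h0_cont)
  have m1: "(\<lambda>x. fK N K lam c x * (indicator {..<TD} x * x ^ p)) \<in> borel_measurable lborel"
    by measurable
  have m2: "(\<lambda>x. (h0 N K lam c x * x ^ p) * indicator {c..TD} x) \<in> borel_measurable lborel"
    using int by (rule borel_measurable_integrable)
  show "integrable lborel (\<lambda>x. fK N K lam c x * (indicator {..<TD} x * x ^ p))"
    using integrable_cong_AE[OF m1 m2 ae] int by simp
  have "(\<integral>x. fK N K lam c x * (indicator {..<TD} x * x ^ p) \<partial>lborel) =
        (\<integral>x. (h0 N K lam c x * x ^ p) * indicator {c..TD} x \<partial>lborel)"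
    by (rule integral_cong_AE[OF m1 m2 ae])
  also have "\<dots> = (LBINT x=c..TD. h0 N K lam c x * x ^ p)"
    using assms(4) by (simp add: interval_integral_Icc set_lebesgue_integral_def mult.commute)
  also have "\<dots> = G TD - G c"
  proof (rule interval_integral_FTC_finite)
    show "continuous_on {min c TD..max c TD} (\<lambda>x. h0 N K lam c x * x ^ p)"
      by (intro continuous_at_imp_continuous_on ballI continuous_intros h0_cont)
    fix x show "(G has_vector_derivative h0 N K lam c x * x ^ p) (at x within {min c TD..max c TD})"
      using G[of x] by (auto simp: has_real_derivative_iff_has_vector_derivative[symmetric]
           intro: has_field_derivative_at_within)
  qed
  finally show "(\<integral>x. fK N K lam c x * (indicator {..<TD} x * x ^ p) \<partial>lborel) = G TD - G c" .
qed

context setting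
begin

lemma E_g:
  fixes g :: "real \<Rightarrow> real"
  assumes [measurable]: "g \<in> borel_measurable borel"
    and int: "integrable lborel (\<lambda>x. fK N K lam c x * g x)"
  shows "integrable M (\<lambda>\<omega>. g (X \<omega>))" "(\<integral>\<omega>. g (X \<omega>) \<partial>M) = (\<integral>x. fK N K lam c x * g x \<partial>lborel)"
proof -
  have nn: "AE x in lborel. 0 \<le> fK N K lam c x" using fK_nonneg[OF K1 KN lam] by simp
  have "integrable dens g"
    using int by (subst integrable_density) (auto simp: nn)
  then have "integrable (distr M borel X) g" by (simp add: distr_X)
  then show "integrable M (\<lambda>\<omega>. g (X \<omega>))" by (subst (asm) integrable_distr_eq) auto
  have "(\<integral>\<omega>. g (X \<omega>) \<partial>M) = (\<integral>x. g x \<partial>distr M borel X)"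
    by (rule integral_distr[symmetric]) auto
  also have "\<dots> = (\<integral>x. g x \<partial>dens)" by (simp add: distr_X)
  also have "\<dots> = (\<integral>x. fK N K lam c x * g x \<partial>lborel)"
    by (subst integral_density) (auto simp: nn)
  finally show "(\<integral>\<omega>. g (X \<omega>) \<partial>M) = (\<integral>x. fK N K lam c x * g x \<partial>lborel)" .
qed

end

lemma shifted_exp_cdf_alt: "lam > 0 \<Longrightarrow> shifted_exp_cdf lam c = (\<lambda>t. max 0 (1 - exp (- lam * (t - c))))"
proof
  fix t assume "lam > 0"
  show "shifted_exp_cdf lam c t = max 0 (1 - exp (- lam * (t - c)))"
  proof (cases "t \<le> c")
    case True
    then have "- lam * (t - c) \<ge> 0" using \<open>lam > 0\<close> mult_nonneg_nonpos[of lam "t - c"] by simp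
    then have "exp (- lam * (t - c)) \<ge> 1" by simp
    then show ?thesis using True by (simp add: shifted_exp_cdf_def)
  next
    case False
    then have "- lam * (t - c) < 0" using \<open>lam > 0\<close> by simp
    then have "exp (- lam * (t - c)) < 1" by simp
    then show ?thesis using False by (simp add: shifted_exp_cdf_def)
  qed
qed

context setting
begin

abbreviation "D \<equiv> distr M borel (T 1)"

lemma one_I: "1 \<in> I" using N1 by simp

lemma cdf_Ti: "i \<in> I \<Longrightarrow> cdf (distr M borel (T i)) = shifted_exp_cdf lam c"
proof
  fix t assume i: "i \<in> I"
  have "cdf (distr M borel (T i)) t = measure M (T i -` {..t} \<inter> space M)"
    unfolding cdf_def using meas[OF i] by (simp add: measure_distr)
  also have "T i -` {..t} \<inter> space M = {\<omega> \<in> space M. T i \<omega> \<le> t}" by auto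
  finally show "cdf (distr M borel (T i)) t = shifted_exp_cdf lam c t" using cdfT[OF i] by simp
qed

lemma distr_Ti: assumes "i \<in> I" shows "distr M borel (T i) = D"
proof (rule cdf_unique)
  show "real_distribution (distr M borel (T i))" by (rule real_distribution_distr[OF meas[OF assms]])
  show "real_distribution D" by (rule real_distribution_distr[OF meas[OF one_I]])
  show "cdf (distr M borel (T i)) = cdf D" by (simp only: cdf_Ti[OF assms] cdf_Ti[OF one_I])
qed

lemma D_real: "real_distribution D"
  by (rule real_distribution_distr[OF meas[OF one_I]])

lemma D_atom: "emeasure D {x} = 0"
proof -
  have fb: "finite_borel_measure D" by (rule real_distribution.finite_borel_measure_M[OF D_real])
  have "isCont (cdf D) x" unfolding cdf_Ti[OF one_I] shifted_exp_cdf_alt[OF lam]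
    by (intro continuous_intros)
  then have "measure D {x} = 0" using finite_borel_measure.isCont_cdf[OF fb] by simp
  moreover have "emeasure D {x} \<noteq> top"
  proof -
    have "emeasure D {x} \<le> 1"
      by (rule prob_space.emeasure_le_1[OF prob_space_distr[OF meas[OF one_I]]])
    also have "(1::ennreal) < top" by simp
    finally show ?thesis by simp
  qed
  ultimately show ?thesis by (simp add: emeasure_eq_ennreal_measure)
qed

lemma ties: assumes "i \<in> I" "j \<in> I" "i \<noteq> j"
  shows "emeasure M {\<omega>\<in>space M. T i \<omega> = T j \<omega>} = 0"
proof -
  have "indep_var (PiM {i} (\<lambda>_. borel)) (\<lambda>\<omega>. restrict (\<lambda>k. T k \<omega>) {i})
                  (PiM {j} (\<lambda>_. borel)) (\<lambda>\<omega>. restrict (\<lambda>k. T k \<omega>) {j})"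
    using assms by (intro indep_var_restrict[OF indep]) auto
  then have "indep_var borel ((\<lambda>x. x i) \<circ> (\<lambda>\<omega>. restrict (\<lambda>k. T k \<omega>) {i}))
                  borel ((\<lambda>x. x j) \<circ> (\<lambda>\<omega>. restrict (\<lambda>k. T k \<omega>) {j}))"
    by (rule indep_var_compose[OF _ measurable_component_singleton measurable_component_singleton]) simp_all
  moreover have "((\<lambda>x. x i) \<circ> (\<lambda>\<omega>. restrict (\<lambda>k. T k \<omega>) {i})) = T i"
       "((\<lambda>x. x j) \<circ> (\<lambda>\<omega>. restrict (\<lambda>k. T k \<omega>) {j})) = T j" by auto
  ultimately have ind: "indep_var borel (T i) borel (T j)" by simp
  have "distr M borel (T i) \<Otimes>\<^sub>M distr M borel (T j) = distr M (borel \<Otimes>\<^sub>M borel) (\<lambda>x. (T i x, T j x))"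
    using ind indep_var_distribution_eq by blast
  then have eq: "D \<Otimes>\<^sub>M D = distr M (borel \<Otimes>\<^sub>M borel) (\<lambda>x. (T i x, T j x))"
    by (simp only: distr_Ti[OF assms(1)] distr_Ti[OF assms(2)])
  define \<Delta> where "\<Delta> = {p::real \<times> real. fst p = snd p}"
  have \<Delta>: "\<Delta> \<in> sets (borel \<Otimes>\<^sub>M borel)"
  proof -
    have "closed \<Delta>" unfolding \<Delta>_def by (intro closed_Collect_eq continuous_intros)
    then have "\<Delta> \<in> sets borel" by (rule borel_closed)
    then show ?thesis by (simp only: borel_prod)
  qed
  have "emeasure M {\<omega>\<in>space M. T i \<omega> = T j \<omega>} = emeasure M ((\<lambda>x. (T i x, T j x)) -` \<Delta> \<inter> space M)"
    by (intro arg_cong[where f="emeasure M"]) (auto simp: \<Delta>_def)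
  also have "\<dots> = emeasure (distr M (borel \<Otimes>\<^sub>M borel) (\<lambda>x. (T i x, T j x))) \<Delta>"
  proof -
    have pm: "(\<lambda>x. (T i x, T j x)) \<in> measurable M (borel \<Otimes>\<^sub>M borel)"
      by (rule measurable_Pair[OF meas[OF assms(1)] meas[OF assms(2)]])
    show ?thesis by (rule emeasure_distr[OF pm \<Delta>, symmetric])
  qed
  also have "\<dots> = emeasure (D \<Otimes>\<^sub>M D) \<Delta>" by (simp only: eq)
  also have "\<dots> = (\<integral>\<^sup>+x. emeasure D (Pair x -` \<Delta>) \<partial>D)"
  proof -
    have "sigma_finite_measure D"
      by (rule prob_space_imp_sigma_finite[OF prob_space_distr[OF meas[OF one_I]]])
    then show ?thesis using \<Delta> by (intro sigma_finite_measure.emeasure_pair_measure_alt) simp_all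
  qed
  also have "\<dots> = (\<integral>\<^sup>+x. 0 \<partial>D)"
  proof (intro nn_integral_cong)
    fix x
    have "Pair x -` \<Delta> = {x}" by (auto simp: \<Delta>_def)
    then show "emeasure D (Pair x -` \<Delta>) = 0" by (simp only: D_atom)
  qed
  finally show ?thesis by simp
qed

lemma AE_distinct: "AE \<omega> in M. inj_on (\<lambda>i. T i \<omega>) I"
proof -
  have "AE \<omega> in M. \<forall>p\<in>{p\<in>I\<times>I. fst p \<noteq> snd p}. T (fst p) \<omega> \<noteq> T (snd p) \<omega>"
  proof (rule AE_finite_allI)
    show "finite {p\<in>I\<times>I. fst p \<noteq> snd p}" by simp
    fix p assume p: "p \<in> {p\<in>I\<times>I. fst p \<noteq> snd p}"
    have [measurable]: "T (fst p) \<in> borel_measurable M" "T (snd p) \<in> borel_measurable M"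
      using p meas by auto
    have "{\<omega>\<in>space M. T (fst p) \<omega> = T (snd p) \<omega>} \<in> sets M" by measurable
    then have "{\<omega>\<in>space M. T (fst p) \<omega> = T (snd p) \<omega>} \<in> null_sets M"
      using p ties[of "fst p" "snd p"] by (intro null_setsI) auto
    then show "AE \<omega> in M. T (fst p) \<omega> \<noteq> T (snd p) \<omega>"
      by (rule AE_I') auto
  qed
  then show ?thesis
  proof eventually_elim
    case (elim \<omega>)
    show ?case unfolding inj_on_def
    proof (intro ballI impI)
      fix x y assume "x \<in> I" "y \<in> I" "T x \<omega> = T y \<omega>"
      then show "x = y" using elim[rule_format, of "(x, y)"] by auto
    qed
  qed
qed

end

lemma len_filter_card:
  "length (filter P (map (\<lambda>i. T i \<omega>) [1..<N+1])) = card {i\<in>{1..N}. P (T i \<omega>)}"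
proof -
  have "set [1..<N+1] = {1..N}" by auto
  then have "length (filter P (map (\<lambda>i. T i \<omega>) [1..<N+1])) = card ({i. P (T i \<omega>)} \<inter> {1..N})"
    by (simp add: filter_map distinct_length_filter o_def)
  also have "{i. P (T i \<omega>)} \<inter> {1..N} = {i\<in>{1..N}. P (T i \<omega>)}" by auto
  finally show ?thesis .
qed

lemma kth_perm:
  assumes "\<sigma> ` {1..N} = {1..N}" "inj_on \<sigma> {1..N}"
  shows "kth_smallest N K (\<lambda>k x. x k) (\<lambda>k\<in>{1..N}. x (\<sigma> k)) = kth_smallest N K (\<lambda>k x. x k) x"
proof -
  define xs where "xs = [1..<N+1]"
  have sxs: "set xs = {1..N}" unfolding xs_def by auto
  have me: "map (\<lambda>k. (\<lambda>k\<in>{1..N}. x (\<sigma> k)) k) xs = map x (map \<sigma> xs)"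
    using sxs by (auto intro!: map_cong)
  have "mset (map \<sigma> xs) = mset xs"
  proof -
    have "distinct (map \<sigma> xs)" using assms sxs by (simp add: distinct_map xs_def)
    moreover have "set (map \<sigma> xs) = set xs" using assms sxs by simp
    moreover have "distinct xs" by (simp add: xs_def)
    ultimately show ?thesis using set_eq_iff_mset_eq_distinct by blast
  qed
  then have "mset (map x (map \<sigma> xs)) = mset (map x xs)" by (metis mset_map)
  then have "mset (map (\<lambda>k. (\<lambda>k\<in>{1..N}. x (\<sigma> k)) k) xs) = mset (map x xs)"
    unfolding me .
  then have "sort (map (\<lambda>k. (\<lambda>k\<in>{1..N}. x (\<sigma> k)) k) xs) = sort (map x xs)"
    by (intro properties_for_sort) auto
  then show ?thesis unfolding kth_smallest_def xs_def by simp
qed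

context setting
begin

abbreviation "A i \<equiv> {\<omega>\<in>space M. X \<omega> < T i \<omega>}"
abbreviation "kth \<equiv> kth_smallest N K (\<lambda>k x. x k)"

lemma A_sets: "i \<in> I \<Longrightarrow> A i \<in> sets M"
proof -
  assume "i \<in> I"
  then have [measurable]: "T i \<in> borel_measurable M" by (rule meas)
  show ?thesis by measurable
qed

lemma kth_Y: "kth (\<lambda>k\<in>I. T k \<omega>) = X \<omega>"
  unfolding kth_smallest_def by (auto intro!: arg_cong2[where f=nth] arg_cong[where f=sort] map_cong)

lemma count_gt:
  assumes "inj_on (\<lambda>i. T i \<omega>) I"
  shows "card {i\<in>I. X \<omega> < T i \<omega>} = N - K"
proof -
  define xs where "xs = map (\<lambda>i. T i \<omega>) [1..<N+1]"
  have sI: "set [1..<N+1] = I" by auto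
  have d: "distinct xs" unfolding xs_def distinct_map sI using assms by simp
  have l: "length xs = N" unfolding xs_def by simp
  have X: "X \<omega> = sort xs ! (K - 1)" unfolding kth_smallest_def xs_def ..
  have "length (filter (\<lambda>x. x \<le> X \<omega>) xs) = K" unfolding X using kth_count_eq[OF d K1] KN l by simp
  then have c: "card {i\<in>I. T i \<omega> \<le> X \<omega>} = K" unfolding xs_def len_filter_card .
  have "{i\<in>I. X \<omega> < T i \<omega>} = I - {i\<in>I. T i \<omega> \<le> X \<omega>}" by auto
  moreover have "card (I - {i\<in>I. T i \<omega> \<le> X \<omega>}) = card I - card {i\<in>I. T i \<omega> \<le> X \<omega>}"
    by (rule card_Diff_subset) auto
  ultimately have "card {i\<in>I. X \<omega> < T i \<omega>} = card I - card {i\<in>I. T i \<omega> \<le> X \<omega>}"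
    by simp
  then show ?thesis using c by simp
qed

lemma exch:
  fixes g :: "real \<Rightarrow> real"
  assumes g[measurable]: "g \<in> borel_measurable borel" and i: "i \<in> I" and n: "n \<in> I"
  shows "(\<integral>\<omega>. indicator (A i) \<omega> * g (X \<omega>) \<partial>M) = (\<integral>\<omega>. indicator (A n) \<omega> * g (X \<omega>) \<partial>M)"
proof -
  define PM where "PM = PiM I (\<lambda>_. borel :: real measure)"
  define P where "P = PiM I (\<lambda>_. D)"
  define Y where "Y = (\<lambda>\<omega>. \<lambda>k\<in>I. T k \<omega>)"
  define \<phi> where "\<phi> = (\<lambda>i x. (if kth x < x i then 1 else 0) * g (kth x))"
  have Ym: "Y \<in> measurable M PM" unfolding Y_def PM_def
    by (rule measurable_restrict) (rule meas)
  have "distr M PM Y = PiM I (\<lambda>k. distr M borel (T k))"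
    unfolding Y_def PM_def using N1 meas indep
    by (subst indep_vars_iff_distr_eq_PiM'[symmetric]) auto
  also have "\<dots> = P" unfolding P_def by (intro PiM_cong refl distr_Ti)
  finally have dY: "distr M PM Y = P" .
  have setsP: "sets P = sets PM" unfolding P_def PM_def by (intro sets_PiM_cong) auto
  have kthm: "kth \<in> borel_measurable PM"
    unfolding PM_def by (intro kth_meas K1 KN measurable_component_singleton) auto
  have phim: "\<phi> j \<in> borel_measurable PM" if "j \<in> I" for j
  proof -
    have [measurable]: "kth \<in> borel_measurable PM" by (rule kthm)
    have [measurable]: "(\<lambda>x. x j) \<in> borel_measurable PM"
      unfolding PM_def using that by (rule measurable_component_singleton)
    show ?thesis unfolding \<phi>_def by measurable
  qed
  have phimP: "\<phi> j \<in> borel_measurable P" if "j \<in> I" for j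
    using phim[OF that] measurable_cong_sets[OF setsP refl] by blast
  have E: "(\<integral>\<omega>. indicator (A j) \<omega> * g (X \<omega>) \<partial>M) = (\<integral>x. \<phi> j x \<partial>P)" if "j \<in> I" for j
  proof -
    have "(\<integral>\<omega>. indicator (A j) \<omega> * g (X \<omega>) \<partial>M) = (\<integral>\<omega>. \<phi> j (Y \<omega>) \<partial>M)"
    proof (rule Bochner_Integration.integral_cong[OF refl])
      fix \<omega> assume "\<omega> \<in> space M"
      then show "indicator (A j) \<omega> * g (X \<omega>) = \<phi> j (Y \<omega>)"
        unfolding \<phi>_def Y_def kth_Y using that by (simp add: indicator_def)
    qed
    also have "\<dots> = (\<integral>x. \<phi> j x \<partial>distr M PM Y)"
      by (rule integral_distr[symmetric, OF Ym phim[OF that]])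
    finally show ?thesis unfolding dY .
  qed
  define \<sigma> where "\<sigma> = (\<lambda>k. if k = n then i else if k = i then n else k)"
  have \<sigma>I: "\<sigma> ` I = I" unfolding \<sigma>_def using i n by (auto simp: image_iff) 
  have \<sigma>inj: "inj_on \<sigma> I" unfolding \<sigma>_def inj_on_def by auto
  have \<sigma>fun: "\<sigma> \<in> I \<rightarrow> I" using \<sigma>I by auto
  define R where "R = (\<lambda>x::nat\<Rightarrow>real. \<lambda>k\<in>I. x (\<sigma> k))"
  have Rm: "R \<in> measurable P P" unfolding R_def P_def
  proof (rule measurable_restrict)
    fix k assume "k \<in> I"
    then have "\<sigma> k \<in> I" using \<sigma>fun by auto
    then show "(\<lambda>x. x (\<sigma> k)) \<in> measurable (PiM I (\<lambda>_. D)) D"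
      by (rule measurable_component_singleton)
  qed
  have dR: "distr P P R = P"
    unfolding P_def R_def
  proof -
    have pD: "prob_space D" by (rule prob_space_distr[OF meas[OF one_I]])
    show "distr (PiM I (\<lambda>_. D)) (PiM I (\<lambda>_. D)) (\<lambda>x. \<lambda>k\<in>I. x (\<sigma> k)) = PiM I (\<lambda>_. D)"
      using distr_PiM_reindex[of I "\<lambda>_. D" \<sigma> I, OF pD \<sigma>inj \<sigma>fun] by simp
  qed
  have "(\<integral>x. \<phi> n x \<partial>P) = (\<integral>x. \<phi> n x \<partial>distr P P R)" unfolding dR ..
  also have "\<dots> = (\<integral>x. \<phi> n (R x) \<partial>P)" by (rule integral_distr[OF Rm phimP[OF n]])
  also have "\<dots> = (\<integral>x. \<phi> i x \<partial>P)"
  proof (rule Bochner_Integration.integral_cong[OF refl])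
    fix x
    have "kth (R x) = kth x" unfolding R_def by (rule kth_perm[OF \<sigma>I \<sigma>inj])
    moreover have "R x n = x i" unfolding R_def \<sigma>_def using n by simp
    ultimately show "\<phi> n (R x) = \<phi> i x" unfolding \<phi>_def by simp
  qed
  finally show ?thesis using E[OF i] E[OF n] by simp
qed

lemma sumA:
  fixes g :: "real \<Rightarrow> real"
  assumes g[measurable]: "g \<in> borel_measurable borel" and int: "integrable M (\<lambda>\<omega>. g (X \<omega>))"
    and n: "n \<in> I"
  shows "(\<integral>\<omega>. indicator (A n) \<omega> * g (X \<omega>) \<partial>M) = real (N - K) / real N * (\<integral>\<omega>. g (X \<omega>) \<partial>M)"
proof -
  have inti: "integrable M (\<lambda>\<omega>. indicator (A i) \<omega> * g (X \<omega>))" if "i \<in> I" for i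
    using integrable_mult_indicator[OF A_sets[OF that] int] by simp
  have "(\<Sum>i\<in>I. (\<integral>\<omega>. indicator (A i) \<omega> * g (X \<omega>) \<partial>M)) = real N * (\<integral>\<omega>. indicator (A n) \<omega> * g (X \<omega>) \<partial>M)"
    using exch[OF g _ n] by simp
  moreover have "(\<Sum>i\<in>I. (\<integral>\<omega>. indicator (A i) \<omega> * g (X \<omega>) \<partial>M)) = (\<integral>\<omega>. (\<Sum>i\<in>I. indicator (A i) \<omega> * g (X \<omega>)) \<partial>M)"
    using Bochner_Integration.integral_sum[where I=I and f="\<lambda>i \<omega>. indicator (A i) \<omega> * g (X \<omega>)"] inti by simp
  moreover have "(\<integral>\<omega>. (\<Sum>i\<in>I. indicator (A i) \<omega> * g (X \<omega>)) \<partial>M) = (\<integral>\<omega>. real (N - K) * g (X \<omega>) \<partial>M)"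
  proof (rule integral_cong_AE)
    show "(\<lambda>\<omega>. \<Sum>i\<in>I. indicator (A i) \<omega> * g (X \<omega>)) \<in> borel_measurable M"
      using inti by (intro borel_measurable_sum borel_measurable_integrable) auto
    show "(\<lambda>\<omega>. real (N - K) * g (X \<omega>)) \<in> borel_measurable M"
      using int by (intro borel_measurable_times borel_measurable_const borel_measurable_integrable)
    show "AE \<omega> in M. (\<Sum>i\<in>I. indicator (A i) \<omega> * g (X \<omega>)) = real (N - K) * g (X \<omega>)"
      using AE_distinct AE_space
    proof eventually_elim
      case (elim \<omega>)
      have "(\<Sum>i\<in>I. indicator (A i) \<omega> * g (X \<omega>)) = (\<Sum>i\<in>I. (if X \<omega> < T i \<omega> then 1 else 0)) * g (X \<omega>)"
        unfolding sum_distrib_right using elim by (intro sum.cong) (auto simp: indicator_def)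
      also have "(\<Sum>i\<in>I. (if X \<omega> < T i \<omega> then 1 else 0)) = real (card {i\<in>I. X \<omega> < T i \<omega>})"
        by (rule card_as_sum[symmetric]) simp
      also have "card {i\<in>I. X \<omega> < T i \<omega>} = N - K" using count_gt elim by simp
      finally show ?case .
    qed
  qed
  ultimately have "real N * (\<integral>\<omega>. indicator (A n) \<omega> * g (X \<omega>) \<partial>M) = real (N - K) * (\<integral>\<omega>. g (X \<omega>) \<partial>M)"
    by simp
  then show ?thesis using N1 by (simp add: field_simps)
qed

end

theorem proposition1:
  fixes M :: "'a measure" and T :: "nat \<Rightarrow> 'a \<Rightarrow> real"
    and N K n :: nat and lam c TD :: real
  assumes "prob_space M"
    and "N \<ge> 1" and "1 \<le> K" and "K \<le> N"
    and "lam > 0" and "c > 0" and "TD > c"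
    and "\<And>i. i \<in> {1..N} \<Longrightarrow> T i \<in> borel_measurable M"
    and "prob_space.indep_vars M (\<lambda>_. borel) T {1..N}"
    and "\<And>i t. i \<in> {1..N} \<Longrightarrow>
           measure M {\<omega> \<in> space M. T i \<omega> \<le> t} = shifted_exp_cdf lam c t"
    and "n \<in> {1..N}"
    and "CF1 = {\<omega> \<in> space M. kth_smallest N K T \<omega> < TD \<and>
                  T n \<omega> > min TD (kth_smallest N K T \<omega>)}"
    and "measure M CF1 > 0"
  shows "cond_expect_event M (kth_smallest N K T) CF1 =
           1 / (1 - probZ lam c TD N K) *
           (\<Sum>j<K. coefB N K j / (lam * (coefU N K j)\<^sup>2) *
              (1 + c * lam * coefU N K j
                 - (1 + TD * lam * coefU N K j) * coefV lam c TD N K j))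
         \<and> cond_expect_event M (\<lambda>\<omega>. (kth_smallest N K T \<omega>)\<^sup>2) CF1 =
           1 / (1 - probZ lam c TD N K) *
           (\<Sum>j<K. coefB N K j / (lam\<^sup>2 * (coefU N K j) ^ 3) *
              ((1 + c * lam * coefU N K j)\<^sup>2 + 1
                 - ((1 + TD * lam * coefU N K j)\<^sup>2 + 1) * coefV lam c TD N K j))"
proof -
  have st: "setting M T N K lam c"
    unfolding setting_def setting_axioms_def using assms by auto
  interpret setting M T N K lam c by (rule st)
  define g :: "nat \<Rightarrow> real \<Rightarrow> real" where "g = (\<lambda>p x. indicator {..<TD} x * x ^ p)"
  have gm: "g p \<in> borel_measurable borel" for p unfolding g_def by measurable
  define E where "E = (\<lambda>p. \<integral>x. fK N K lam c x * g p x \<partial>lborel)"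
  have Gd: "\<And>x. DERIV (G0 N K lam c) x :> h0 N K lam c x * x ^ 0"
           "\<And>x. DERIV (G1 N K lam c) x :> h0 N K lam c x * x ^ 1"
           "\<And>x. DERIV (G2 N K lam c) x :> h0 N K lam c x * x ^ 2"
    using G0_deriv'[OF KN] G1_deriv[OF KN lam] G2_deriv[OF KN lam] by auto
  have key: "(\<integral>\<omega>. indicator (A n) \<omega> * g p (X \<omega>) \<partial>M) = real (N - K) / real N * E p"
    and Ev: "E p = G TD - G c"
    if "\<And>x. DERIV G x :> h0 N K lam c x * x ^ p" for G p
  proof -
    have int: "integrable lborel (\<lambda>x. fK N K lam c x * g p x)"
      unfolding g_def using integral_fK(1)[OF K1 KN lam \<open>c < TD\<close> that] .
    show "E p = G TD - G c"
      unfolding E_def g_def using integral_fK(2)[OF K1 KN lam \<open>c < TD\<close> that] .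
    have "integrable M (\<lambda>\<omega>. g p (X \<omega>))" "(\<integral>\<omega>. g p (X \<omega>) \<partial>M) = E p"
      using E_g[OF gm int] unfolding E_def by auto
    then show "(\<integral>\<omega>. indicator (A n) \<omega> * g p (X \<omega>) \<partial>M) = real (N - K) / real N * E p"
      using sumA[OF gm _ \<open>n \<in> I\<close>] by simp
  qed
  define r where "r = real (N - K) / real N"
  have CF: "indicator CF1 \<omega> = (indicator (A n) \<omega> * indicator {..<TD} (X \<omega>) :: real)" for \<omega>
    unfolding assms(12) by (auto simp: indicator_def min_def)
  have m0: "measure M CF1 = r * E 0"
  proof -
    have CFs: "CF1 \<subseteq> space M" unfolding assms(12) by auto
    have "measure M CF1 = (\<integral>\<omega>. indicator CF1 \<omega> \<partial>M)" using CFs by (simp add: Int_absorb2)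
    also have "\<dots> = (\<integral>\<omega>. indicator (A n) \<omega> * g 0 (X \<omega>) \<partial>M)"
      unfolding CF g_def by simp
    finally show ?thesis using key[OF Gd(1)] unfolding r_def by simp
  qed
  have m1: "(\<integral>\<omega>. indicator CF1 \<omega> * X \<omega> \<partial>M) = r * E 1"
  proof -
    have "(\<integral>\<omega>. indicator CF1 \<omega> * X \<omega> \<partial>M) = (\<integral>\<omega>. indicator (A n) \<omega> * g 1 (X \<omega>) \<partial>M)"
      unfolding CF g_def by (simp add: mult.assoc)
    then show ?thesis using key[OF Gd(2)] unfolding r_def by simp
  qed
  have m2: "(\<integral>\<omega>. indicator CF1 \<omega> * (X \<omega>)\<^sup>2 \<partial>M) = r * E 2"
  proof -
    have "(\<integral>\<omega>. indicator CF1 \<omega> * (X \<omega>)\<^sup>2 \<partial>M) = (\<integral>\<omega>. indicator (A n) \<omega> * g 2 (X \<omega>) \<partial>M)"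
      unfolding CF g_def by (simp add: mult.assoc)
    then show ?thesis using key[OF Gd(3)] unfolding r_def by simp
  qed
  have r0: "r \<noteq> 0" using m0 assms(13) by auto
  have U: "\<And>j. coefU N K j > 0" using coefU_pos[OF KN] by simp
  have E0: "E 0 = 1 - probZ lam c TD N K"
  proof -
    have "E 0 = G0 N K lam c TD - G0 N K lam c c" using Ev[OF Gd(1)] .
    also have "\<dots> = (\<Sum>j<K. coefB N K j / coefU N K j) - (\<Sum>j<K. coefB N K j * coefV lam c TD N K j / coefU N K j)"
      unfolding G0_def coefV_def by (simp add: sum_subtractf[symmetric] right_diff_distrib)
    also have "\<dots> = 1 - probZ lam c TD N K" unfolding probZ_def sum_BU[OF K1 KN] ..
    finally show ?thesis .
  qed
  have E1: "E 1 = (\<Sum>j<K. coefB N K j / (lam * (coefU N K j)\<^sup>2) *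
              (1 + c * lam * coefU N K j - (1 + TD * lam * coefU N K j) * coefV lam c TD N K j))"
  proof -
    have "E 1 = G1 N K lam c TD - G1 N K lam c c" using Ev[OF Gd(2)] .
    also have "\<dots> = (\<Sum>j<K. coefB N K j / (lam * (coefU N K j)\<^sup>2) *
              (1 + c * lam * coefU N K j - (1 + TD * lam * coefU N K j) * coefV lam c TD N K j))"
      unfolding G1_def sum_subtractf[symmetric]
    proof (intro sum.cong refl)
      fix j
      have "coefU N K j \<noteq> 0" using U[of j] by simp
      then show "coefB N K j * (- (TD / coefU N K j + 1 / (lam * (coefU N K j)\<^sup>2)) * exp (- lam * coefU N K j * (TD - c))) -
         coefB N K j * (- (c / coefU N K j + 1 / (lam * (coefU N K j)\<^sup>2)) * exp (- lam * coefU N K j * (c - c))) =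
         coefB N K j / (lam * (coefU N K j)\<^sup>2) *
              (1 + c * lam * coefU N K j - (1 + TD * lam * coefU N K j) * coefV lam c TD N K j)"
        using lam unfolding coefV_def by (simp add: field_simps power2_eq_square)
    qed
    finally show ?thesis .
  qed
  have E2: "E 2 = (\<Sum>j<K. coefB N K j / (lam\<^sup>2 * (coefU N K j) ^ 3) *
              ((1 + c * lam * coefU N K j)\<^sup>2 + 1
                 - ((1 + TD * lam * coefU N K j)\<^sup>2 + 1) * coefV lam c TD N K j))"
  proof -
    have "E 2 = G2 N K lam c TD - G2 N K lam c c" using Ev[OF Gd(3)] .
    also have "\<dots> = (\<Sum>j<K. coefB N K j / (lam\<^sup>2 * (coefU N K j) ^ 3) *
              ((1 + c * lam * coefU N K j)\<^sup>2 + 1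
                 - ((1 + TD * lam * coefU N K j)\<^sup>2 + 1) * coefV lam c TD N K j))"
      unfolding G2_def sum_subtractf[symmetric]
    proof (intro sum.cong refl)
      fix j
      have "coefU N K j \<noteq> 0" using U[of j] by simp
      then show "coefB N K j * (- (TD\<^sup>2 / coefU N K j + 2 * TD / (lam * (coefU N K j)\<^sup>2) + 2 / (lam\<^sup>2 * (coefU N K j) ^ 3)) * exp (- lam * coefU N K j * (TD - c))) -
         coefB N K j * (- (c\<^sup>2 / coefU N K j + 2 * c / (lam * (coefU N K j)\<^sup>2) + 2 / (lam\<^sup>2 * (coefU N K j) ^ 3)) * exp (- lam * coefU N K j * (c - c))) =
         coefB N K j / (lam\<^sup>2 * (coefU N K j) ^ 3) *
              ((1 + c * lam * coefU N K j)\<^sup>2 + 1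
                 - ((1 + TD * lam * coefU N K j)\<^sup>2 + 1) * coefV lam c TD N K j)"
        using lam unfolding coefV_def by (simp add: field_simps power2_eq_square power3_eq_cube)
    qed
    finally show ?thesis .
  qed
  show ?thesis
    unfolding cond_expect_event_def m0 m1 m2 E0[symmetric] E1[symmetric] E2[symmetric]
    using r0 by simp
qed

end
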